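(* Let $n\ge2$, let $A\in\mathbb R^{n\times n}$ have $A_{i,i+1}=1$ ($i=1,\dots,n-1$) and all other entries $0$, and $b=(0,\dots,0,1)^T$ with entries $b_i$. Let $F_i,\bar F_i,P_i$ ($i=1,\dots,n$) and $Q$ be symmetric real $n\times n$ matrices, $P_{n+1}=0$, and $G,\bar G\in\mathbb R^{n\times n}$ with $i$th rows $G_i,\bar G_i$, such that for $i=1,\dots,n$ $$\bar F_i = F_i + P_{i+1} - \mathbf LP_i - b_iQ,\qquad \bar G_i = G_i - 2b^TP_iA.$$ Then $$\mathbf X_0P_1A = \sum_{i=1}^{n-1}\mathbf X_iF_iA + \tfrac12G - \sum_{i=1}^{n-1}\mathbf X_i\bar F_iA - \tfrac12\bar G.$$
   Context: Here $\mathbf L:\mathbb R^{n\times n}\to\mathbb R^{n\times n}$ is $\mathbf LP=A^TPA$, with $\mathbf L^0P=P$ and $\mathbf L^{k+1}=\mathbf L\circ\mathbf L^k$. $\mathbf X_0P$ is the $n\times n$ matrix whose $k$th row ($k=1,\dots,n$) is the $n$th row of $\mathbf L^{k-1}P$, and $\mathbf X_iP=(A^T)^i\mathbf X_0P$ for $i\ge1$. *)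

theory Defs
  imports "Jordan_Normal_Form.Matrix"
begin

(* Matrices are Jordan_Normal_Form matrices; indices are 0-based there, so the
   paper's (1-based) entry/row i corresponds to index i-1. *)

definition Amat :: "nat \<Rightarrow> real mat" where
  "Amat n = mat n n (\<lambda>(i,j). if j = i + 1 then 1 else 0)"

definition bvec :: "nat \<Rightarrow> real vec" where
  "bvec n = vec n (\<lambda>i. if i = n - 1 then 1 else 0)"

definition bT :: "nat \<Rightarrow> real mat" where
  "bT n = mat_of_rows n [bvec n]"

definition Lop :: "nat \<Rightarrow> real mat \<Rightarrow> real mat" where
  "Lop n P = transpose_mat (Amat n) * P * Amat n"

definition X0 :: "nat \<Rightarrow> real mat \<Rightarrow> real mat" where
  "X0 n P = mat n n (\<lambda>(k,j). ((Lop n ^^ k) P) $$ (n - 1, j))"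

definition Xop :: "nat \<Rightarrow> nat \<Rightarrow> real mat \<Rightarrow> real mat" where
  "Xop n i P = (transpose_mat (Amat n) ^\<^sub>m i) * X0 n P"

fun msum :: "nat \<Rightarrow> (nat \<Rightarrow> real mat) \<Rightarrow> nat \<Rightarrow> real mat" where
  "msum n f 0 = 0\<^sub>m n n"
| "msum n f (Suc k) = msum n f k + f (Suc k)"

end

theory Submission imports Defs begin

lemma Amat_carrier[simp]: "Amat n \<in> carrier_mat n n" by (simp add: Amat_def)
lemma Amat_dims[simp]: "dim_row (Amat n) = n" "dim_col (Amat n) = n" by (simp_all add: Amat_def)
lemma AT_carrier[simp]: "transpose_mat (Amat n) \<in> carrier_mat n n" by simp

lemma sum_pick: "j < n \<Longrightarrow> (\<Sum>l<n. f l * (if j = Suc l then (1::real) else 0)) = (if j = 0 then 0 else f (j - 1))"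
proof (cases j)
  case 0 then show ?thesis by simp
next
  case (Suc m)
  assume "j < n"
  have "(\<Sum>l<n. f l * (if j = Suc l then (1::real) else 0)) = (\<Sum>l<n. if l = m then f l else 0)"
    by (rule sum.cong) (auto simp: Suc)
  also have "\<dots> = f m" using Suc \<open>j<n\<close> by simp
  finally show ?thesis using Suc by simp
qed



lemma multA_entry:
  assumes "M \<in> carrier_mat r n" "i < r" "j < n"
  shows "(M * Amat n) $$ (i,j) = (if j = 0 then 0 else M $$ (i, j - 1))"
proof -
  have "(M * Amat n) $$ (i,j) = (\<Sum>l<n. M $$ (i,l) * (if j = Suc l then 1 else 0))"
    using assms by (simp add: Amat_def scalar_prod_def lessThan_atLeast0 row_def col_def)
  then show ?thesis using sum_pick[OF assms(3)] by simp
qed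

lemma ATmult_entry:
  assumes "M \<in> carrier_mat n n" "i < n" "j < n"
  shows "(transpose_mat (Amat n) * M) $$ (i,j) = (if i = 0 then 0 else M $$ (i - 1, j))"
proof -
  have "(transpose_mat (Amat n) * M) $$ (i,j) = (\<Sum>l<n. M $$ (l,j) * (if i = Suc l then 1 else 0))"
    using assms by (simp add: Amat_def scalar_prod_def lessThan_atLeast0 row_def col_def mult.commute)
  then show ?thesis using sum_pick[OF assms(2)] by simp
qed

lemma Lop_carrier: "M \<in> carrier_mat n n \<Longrightarrow> Lop n M \<in> carrier_mat n n"
  unfolding Lop_def by (rule mult_carrier_mat[of _ n n], rule mult_carrier_mat[of _ n n]) auto

lemma Lpow_carrier: "M \<in> carrier_mat n n \<Longrightarrow> (Lop n ^^ m) M \<in> carrier_mat n n"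
  by (induction m) (auto simp: Lop_carrier)

lemma Lop_entry:
  assumes "M \<in> carrier_mat n n" "a < n" "b < n"
  shows "Lop n M $$ (a,b) = (if a = 0 \<or> b = 0 then 0 else M $$ (a - 1, b - 1))"
proof -
  have c: "transpose_mat (Amat n) * M \<in> carrier_mat n n" using assms by (intro mult_carrier_mat[of _ n n]) auto
  show ?thesis unfolding Lop_def
    using multA_entry[OF c assms(2,3)] ATmult_entry[OF assms(1) assms(2)] assms by auto
qed

lemma Lpow_entry:
  assumes "M \<in> carrier_mat n n" "a < n" "b < n"
  shows "(Lop n ^^ m) M $$ (a,b) = (if m \<le> a \<and> m \<le> b then M $$ (a - m, b - m) else 0)"
  using assms(2,3)
proof (induction m arbitrary: a b)
  case 0 then show ?case by simp
next
  case (Suc m)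
  have "(Lop n ^^ Suc m) M $$ (a,b) = Lop n ((Lop n ^^ m) M) $$ (a,b)" by simp
  also have "\<dots> = (if a = 0 \<or> b = 0 then 0 else (Lop n ^^ m) M $$ (a - 1, b - 1))"
    by (rule Lop_entry[OF Lpow_carrier[OF assms(1)] Suc.prems])
  also have "\<dots> = (if Suc m \<le> a \<and> Suc m \<le> b then M $$ (a - Suc m, b - Suc m) else 0)"
    using Suc.IH[of "a-1" "b-1"] Suc.prems by auto
  finally show ?case .
qed

lemma ATpow_carrier[simp]: "transpose_mat (Amat n) ^\<^sub>m k \<in> carrier_mat n n"
  by simp

lemma ATpow_entry:
  assumes "M \<in> carrier_mat n n" "a < n" "b < n"
  shows "(transpose_mat (Amat n) ^\<^sub>m k * M) $$ (a,b) = (if k \<le> a then M $$ (a - k, b) else 0)"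
  using assms
proof (induction k arbitrary: M a)
  case 0 then show ?case by (auto simp: carrier_matD)
next
  case (Suc k)
  have "transpose_mat (Amat n) ^\<^sub>m Suc k * M = transpose_mat (Amat n) ^\<^sub>m k * (transpose_mat (Amat n) * M)"
    using Suc.prems by (simp add: assoc_mult_mat[of _ n n _ n _ n])
  also have "\<dots> $$ (a,b) = (if k \<le> a then (transpose_mat (Amat n) * M) $$ (a - k, b) else 0)"
    by (rule Suc.IH) (use Suc.prems in \<open>auto intro: mult_carrier_mat[of _ n n]\<close>)
  also have "\<dots> = (if Suc k \<le> a then M $$ (a - Suc k, b) else 0)"
    using ATmult_entry[OF Suc.prems(1), of "a-k" b] Suc.prems by auto
  finally show ?case .
qed

lemma X0_carrier: "X0 n M \<in> carrier_mat n n" by (simp add: X0_def)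
lemma X0_entry: "a < n \<Longrightarrow> b < n \<Longrightarrow> X0 n M $$ (a,b) = (Lop n ^^ a) M $$ (n - 1, b)"
  by (simp add: X0_def)

lemma XopA_entry:
  assumes "M \<in> carrier_mat n n" "a < n" "b < n"
  shows "(Xop n i M * Amat n) $$ (a,b) = (if b = 0 then 0 else if i \<le> a then (Lop n ^^ (a - i)) M $$ (n - 1, b - 1) else 0)"
proof -
  have c: "Xop n i M \<in> carrier_mat n n" unfolding Xop_def by (intro mult_carrier_mat[of _ n n] X0_carrier) auto
  show ?thesis using multA_entry[OF c assms(2,3)] unfolding Xop_def
    using ATpow_entry[OF X0_carrier assms(2), of "b-1" i] X0_entry assms by auto
qed

lemma msum_carrier: "(\<And>i. i \<in> {1..k} \<Longrightarrow> f i \<in> carrier_mat n n) \<Longrightarrow> msum n f k \<in> carrier_mat n n"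
  by (induction k) auto

lemma msum_entry: "(\<And>i. i \<in> {1..k} \<Longrightarrow> f i \<in> carrier_mat n n) \<Longrightarrow> a < n \<Longrightarrow> b < n \<Longrightarrow>
   msum n f k $$ (a,b) = (\<Sum>i=1..k. f i $$ (a,b))"
proof (induction k)
  case 0 then show ?case by simp
next
  case (Suc k)
  have c: "msum n f k \<in> carrier_mat n n" by (rule msum_carrier) (use Suc.prems in auto)
  have "f (Suc k) \<in> carrier_mat n n" using Suc.prems by auto
  then have "msum n f (Suc k) $$ (a,b) = msum n f k $$ (a,b) + f (Suc k) $$ (a,b)"
    using c Suc.prems by (simp only: msum.simps, subst index_add_mat) (auto simp: carrier_matD)
  then show ?case using Suc by simp
qed

lemma telesc: "(\<Sum>i=1..k. (g i - g (Suc i)::real)) = g 1 - g (Suc k)"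
  by (induction k) auto

lemma Lpow_Fbar:
  assumes "Fb \<in> carrier_mat n n" "F \<in> carrier_mat n n" "P1 \<in> carrier_mat n n" "P0 \<in> carrier_mat n n"
    and e: "\<And>x y. x < n \<Longrightarrow> y < n \<Longrightarrow> Fb $$ (x,y) = F $$ (x,y) + P1 $$ (x,y) - Lop n P0 $$ (x,y)"
    and "x < n" "y < n"
  shows "(Lop n ^^ m) Fb $$ (x,y) = (Lop n ^^ m) F $$ (x,y) + (Lop n ^^ m) P1 $$ (x,y) - (Lop n ^^ Suc m) P0 $$ (x,y)"
  using assms by (simp add: Lpow_entry[OF assms(1)] Lpow_entry[OF assms(2)] Lpow_entry[OF assms(3)]
      Lpow_entry[OF assms(4)] Lop_entry[OF assms(4)] e del: funpow.simps)

lemma bTPA_entry: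
  assumes "M \<in> carrier_mat n n" "j < n"
  shows "(bT n * M * Amat n) $$ (0,j) = (if j = 0 then 0 else M $$ (n - 1, j - 1))"
proof -
  have c: "bT n * M \<in> carrier_mat 1 n" using assms by (intro mult_carrier_mat[of _ 1 n]) (auto simp: bT_def)
  have "(bT n * M * Amat n) $$ (0,j) = (if j = 0 then 0 else (bT n * M) $$ (0, j - 1))"
    using multA_entry[OF c _ assms(2)] by simp
  also have "(bT n * M) $$ (0, j - 1) = (\<Sum>l<n. (if l = n - 1 then 1 else 0) * M $$ (l, j - 1))"
    using assms by (simp add: bT_def bvec_def scalar_prod_def lessThan_atLeast0 row_def col_def mat_of_rows_def)
  also have "\<dots> = (\<Sum>l<n. if l = n - 1 then M $$ (l, j - 1) else 0)" by (rule sum.cong) auto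
  also have "\<dots> = M $$ (n - 1, j - 1)" using assms by simp
  finally show ?thesis by simp
qed

theorem theorem4p6:
  fixes n :: nat
    and F Fbar P :: "nat \<Rightarrow> real mat"
    and Q G Gbar :: "real mat"
  assumes n2: "n \<ge> 2"
    and F_dim: "\<And>i. i \<in> {1..n} \<Longrightarrow> F i \<in> carrier_mat n n \<and> transpose_mat (F i) = F i"
    and Fbar_dim: "\<And>i. i \<in> {1..n} \<Longrightarrow> Fbar i \<in> carrier_mat n n \<and> transpose_mat (Fbar i) = Fbar i"
    and P_dim: "\<And>i. i \<in> {1..n} \<Longrightarrow> P i \<in> carrier_mat n n \<and> transpose_mat (P i) = P i"
    and Q_dim: "Q \<in> carrier_mat n n" and Q_sym: "transpose_mat Q = Q"
    and P_last: "P (n + 1) = 0\<^sub>m n n"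
    and G_dim: "G \<in> carrier_mat n n" and Gbar_dim: "Gbar \<in> carrier_mat n n"
    and Fbar_eq: "\<And>i. i \<in> {1..n} \<Longrightarrow>
       Fbar i = F i + P (i + 1) - Lop n (P i) - (bvec n $ (i - 1)) \<cdot>\<^sub>m Q"
    and Gbar_eq: "\<And>i. i \<in> {1..n} \<Longrightarrow>
       row Gbar (i - 1) = row G (i - 1) - 2 \<cdot>\<^sub>v row (bT n * P i * Amat n) 0"
  shows "X0 n (P 1) * Amat n =
           msum n (\<lambda>i. Xop n i (F i) * Amat n) (n - 1) + (1/2) \<cdot>\<^sub>m G
         - msum n (\<lambda>i. Xop n i (Fbar i) * Amat n) (n - 1) - (1/2) \<cdot>\<^sub>m Gbar"
proof -
  let ?L = "\<lambda>m M. (Lop n ^^ m) M"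
  let ?S1 = "msum n (\<lambda>i. Xop n i (F i) * Amat n) (n - 1)"
  let ?S2 = "msum n (\<lambda>i. Xop n i (Fbar i) * Amat n) (n - 1)"
  have XA: "M \<in> carrier_mat n n \<Longrightarrow> Xop n i M * Amat n \<in> carrier_mat n n" for M i
    unfolding Xop_def by (intro mult_carrier_mat[of _ n n] X0_carrier) auto
  have c1: "\<And>i. i \<in> {1..n-1} \<Longrightarrow> Xop n i (F i) * Amat n \<in> carrier_mat n n"
    using F_dim XA by auto
  have c2: "\<And>i. i \<in> {1..n-1} \<Longrightarrow> Xop n i (Fbar i) * Amat n \<in> carrier_mat n n"
    using Fbar_dim XA by auto
  have S1c: "?S1 \<in> carrier_mat n n" by (rule msum_carrier[OF c1])
  have S2c: "?S2 \<in> carrier_mat n n" by (rule msum_carrier[OF c2])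
  have P1c: "P 1 \<in> carrier_mat n n" using P_dim n2 by auto
  have LHSc: "X0 n (P 1) * Amat n \<in> carrier_mat n n"
    by (intro mult_carrier_mat[of _ n n] X0_carrier) auto
  show ?thesis
  proof (rule eq_matI)
    show "dim_row (X0 n (P 1) * Amat n) = dim_row (?S1 + (1/2) \<cdot>\<^sub>m G - ?S2 - (1/2) \<cdot>\<^sub>m Gbar)"
      using LHSc S1c Gbar_dim by (simp add: carrier_matD X0_def)
    show "dim_col (X0 n (P 1) * Amat n) = dim_col (?S1 + (1/2) \<cdot>\<^sub>m G - ?S2 - (1/2) \<cdot>\<^sub>m Gbar)"
      using LHSc S1c Gbar_dim by (simp add: carrier_matD X0_def)
    fix k j assume "k < dim_row (?S1 + (1/2) \<cdot>\<^sub>m G - ?S2 - (1/2) \<cdot>\<^sub>m Gbar)"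
      "j < dim_col (?S1 + (1/2) \<cdot>\<^sub>m G - ?S2 - (1/2) \<cdot>\<^sub>m Gbar)"
    then have k: "k < n" and j: "j < n" using S1c Gbar_dim by auto
    have Pk: "P (Suc k) \<in> carrier_mat n n" using P_dim k by auto
    have rhs: "(?S1 + (1/2) \<cdot>\<^sub>m G - ?S2 - (1/2) \<cdot>\<^sub>m Gbar) $$ (k,j)
       = ?S1 $$ (k,j) + (1/2) * G $$ (k,j) - ?S2 $$ (k,j) - (1/2) * Gbar $$ (k,j)"
      using S1c S2c G_dim Gbar_dim k j by simp
    have "row Gbar k = row G k - 2 \<cdot>\<^sub>v row (bT n * P (Suc k) * Amat n) 0"
      using Gbar_eq[of "Suc k"] k by simp
    then have "row Gbar k $ j = (row G k - 2 \<cdot>\<^sub>v row (bT n * P (Suc k) * Amat n) 0) $ j" by simp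
    moreover have cB: "bT n * P (Suc k) * Amat n \<in> carrier_mat 1 n"
      using Pk by (intro mult_carrier_mat[of _ 1 n]) (auto simp: bT_def)
    moreover have "row (bT n * P (Suc k) * Amat n) 0 $ j = (bT n * P (Suc k) * Amat n) $$ (0,j)"
      using carrier_matD(2)[OF cB] j by (simp add: row_def)
    ultimately have Gb: "Gbar $$ (k,j) = G $$ (k,j) - 2 * (bT n * P (Suc k) * Amat n) $$ (0,j)"
      using G_dim Gbar_dim k j by (simp add: carrier_matD)
    have S1e: "?S1 $$ (k,j) = (\<Sum>i=1..n-1. (Xop n i (F i) * Amat n) $$ (k,j))"
      by (rule msum_entry[OF c1 k j])
    have S2e: "?S2 $$ (k,j) = (\<Sum>i=1..n-1. (Xop n i (Fbar i) * Amat n) $$ (k,j))"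
      by (rule msum_entry[OF c2 k j])
    have lhs: "(X0 n (P 1) * Amat n) $$ (k,j) = (if j = 0 then 0 else ?L k (P 1) $$ (n - 1, j - 1))"
      using multA_entry[OF X0_carrier k j] X0_entry[OF k, of "j-1"] j by auto
    show "(X0 n (P 1) * Amat n) $$ (k,j) = (?S1 + (1/2) \<cdot>\<^sub>m G - ?S2 - (1/2) \<cdot>\<^sub>m Gbar) $$ (k,j)"
    proof (cases "j = 0")
      case True
      have "?S1 $$ (k,j) = 0" unfolding S1e using XopA_entry F_dim k j True
        by (intro sum.neutral) auto
      moreover have "?S2 $$ (k,j) = 0" unfolding S2e using XopA_entry Fbar_dim k j True
        by (intro sum.neutral) auto
      ultimately show ?thesis using lhs rhs Gb bTPA_entry[OF Pk j] True by simp
    next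
      case False
      define c where "c = j - 1"
      have c: "c < n" using j c_def by simp
      have n1: "n - 1 < n" using n2 by simp
      define g where "g i = ?L (Suc k - i) (P i) $$ (n - 1, c)" for i
      have "?S1 $$ (k,j) - ?S2 $$ (k,j) = (\<Sum>i=1..n-1. (Xop n i (F i) * Amat n) $$ (k,j) - (Xop n i (Fbar i) * Amat n) $$ (k,j))"
        unfolding S1e S2e by (simp add: sum_subtractf)
      also have "\<dots> = (\<Sum>i=1..n-1. if i \<le> k then g i - g (Suc i) else 0)"
      proof (rule sum.cong[OF refl])
        fix i assume i: "i \<in> {1..n-1}"
        have Fi: "F i \<in> carrier_mat n n" and Fbi: "Fbar i \<in> carrier_mat n n"
          and Pi: "P i \<in> carrier_mat n n" and Pi1: "P (Suc i) \<in> carrier_mat n n"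
          using F_dim Fbar_dim P_dim i by auto
        have bz: "bvec n $ (i - 1) = 0" proof -
          have "i - 1 < n" "i - 1 \<noteq> n - 1" using i n2 by auto
          then show ?thesis by (simp add: bvec_def)
        qed
        have Lc: "Lop n (P i) \<in> carrier_mat n n" using Lop_carrier[OF Pi] .
        have e: "Fbar i $$ (x,y) = F i $$ (x,y) + P (Suc i) $$ (x,y) - Lop n (P i) $$ (x,y)"
          if "x < n" "y < n" for x y
        proof -
          have "Fbar i = F i + P (Suc i) - Lop n (P i) - 0 \<cdot>\<^sub>m Q" proof -
            have "i \<in> {1..n}" using i by auto
            then show ?thesis using Fbar_eq[of i] bz by simp
          qed
          then show ?thesis using that Fi Pi1 Lc Q_dim by (simp add: carrier_matD)
        qed
        show "(Xop n i (F i) * Amat n) $$ (k,j) - (Xop n i (Fbar i) * Amat n) $$ (k,j)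
              = (if i \<le> k then g i - g (Suc i) else 0)"
          using XopA_entry[OF Fi k j, of i] XopA_entry[OF Fbi k j, of i]
            Lpow_Fbar[OF Fbi Fi Pi1 Pi e n1 c, of "k - i"] False
          by (auto simp: g_def c_def Suc_diff_le)
      qed
      also have "\<dots> = (\<Sum>i=1..k. g i - g (Suc i))"
        using k by (intro sum.mono_neutral_cong_right) auto
      also have "\<dots> = g 1 - g (Suc k)" by (rule telesc)
      finally have D: "?S1 $$ (k,j) - ?S2 $$ (k,j) = g 1 - g (Suc k)" .
      have "g (Suc k) = P (Suc k) $$ (n - 1, c)" by (simp add: g_def)
      moreover have "g 1 = ?L k (P 1) $$ (n - 1, c)" by (simp add: g_def)
      ultimately show ?thesis using lhs rhs Gb bTPA_entry[OF Pk j] False D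
        by (simp add: c_def algebra_simps)
    qed
  qed
qed

end
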